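(* Let $R$ be a Noetherian ring and $I$ an ideal of $R$. Consider the functor $\Gamma_I$ on finitely generated $R$-modules, $\Gamma_I(M)=\{m\in M: I^km=0\text{ for some }k\ge0\}$. The following are equivalent: (a) $\Gamma_I$ is representable; (b) $\Gamma_I$ is finitely generated; (c) $I^n=I^{n+1}$ for some $n\ge0$.
   Context: For an $R$-module $X$, $h_X=\operatorname{Hom}_R(X,-)$. An $R$-linear functor $F$ from finitely generated $R$-modules to themselves is representable if $F\cong h_M$ for some finitely generated $M$, and finitely generated if there is a finitely generated $M$ and a surjective natural transformation $h_M\to F$. *)

theory Defs
  imports "HOL-Algebra.Algebra"
begin

text \<open>Fixed carrier type for objects of the category of finitely generated R-modules.
  Every finitely generated module over a ring with carrier in 'a is isomorphic to a quotient
  of a finite free module R^n, whose elements are cosets, i.e. elements of (nat => 'a) set.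
  Hence the full subcategory of modules with carrier of this type is equivalent to the
  category of all finitely generated R-modules.\<close>

type_synonym 'a obj = "('a, (nat \<Rightarrow> 'a) set) module"

definition fg_module :: "('a, 'c) ring_scheme \<Rightarrow> ('a, 'b) module \<Rightarrow> bool" where
  "fg_module R M \<longleftrightarrow> module R M \<and>
     (\<exists>A. finite A \<and> A \<subseteq> carrier M \<and>
        (\<forall>x \<in> carrier M. \<exists>c. c \<in> A \<rightarrow> carrier R \<and>
            x = finsum M (\<lambda>a. c a \<odot>\<^bsub>M\<^esub> a) A))"

text \<open>R-linear maps M -> N (extensional, so that a map is determined by its values on carrier M).\<close>
definition mod_hom :: "('a, 'c) ring_scheme \<Rightarrow> ('a, 'b) module \<Rightarrow> ('a, 'd) module \<Rightarrow> ('b \<Rightarrow> 'd) set" where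
  "mod_hom R M N = {f. f \<in> carrier M \<rightarrow>\<^sub>E carrier N \<and>
     (\<forall>x \<in> carrier M. \<forall>y \<in> carrier M. f (x \<oplus>\<^bsub>M\<^esub> y) = f x \<oplus>\<^bsub>N\<^esub> f y) \<and>
     (\<forall>r \<in> carrier R. \<forall>x \<in> carrier M. f (r \<odot>\<^bsub>M\<^esub> x) = r \<odot>\<^bsub>N\<^esub> f x)}"

definition hom_add :: "('a, 'b) module \<Rightarrow> ('a, 'd) module \<Rightarrow> ('b \<Rightarrow> 'd) \<Rightarrow> ('b \<Rightarrow> 'd) \<Rightarrow> ('b \<Rightarrow> 'd)" where
  "hom_add M N f g = (\<lambda>x \<in> carrier M. f x \<oplus>\<^bsub>N\<^esub> g x)"

definition hom_smult :: "('a, 'b) module \<Rightarrow> ('a, 'd) module \<Rightarrow> 'a \<Rightarrow> ('b \<Rightarrow> 'd) \<Rightarrow> ('b \<Rightarrow> 'd)" where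
  "hom_smult M N r f = (\<lambda>x \<in> carrier M. r \<odot>\<^bsub>N\<^esub> f x)"

definition ideal_pow :: "('a, 'c) ring_scheme \<Rightarrow> 'a set \<Rightarrow> nat \<Rightarrow> 'a set" where
  "ideal_pow R I k = I [^]\<^bsub>ideals_set R\<^esub> k"

definition Gamma :: "('a, 'c) ring_scheme \<Rightarrow> 'a set \<Rightarrow> ('a, 'b) module \<Rightarrow> 'b set" where
  "Gamma R I M = {m \<in> carrier M. \<exists>k. \<forall>a \<in> ideal_pow R I k. a \<odot>\<^bsub>M\<^esub> m = \<zero>\<^bsub>M\<^esub>}"

definition nat_trans_hom_Gamma ::
  "('a, 'c) ring_scheme \<Rightarrow> 'a set \<Rightarrow> 'a obj \<Rightarrow> ('a obj \<Rightarrow> ((nat \<Rightarrow> 'a) set \<Rightarrow> (nat \<Rightarrow> 'a) set) \<Rightarrow> (nat \<Rightarrow> 'a) set) \<Rightarrow> bool" where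
  "nat_trans_hom_Gamma R I M \<eta> \<longleftrightarrow>
     (\<forall>N. fg_module R N \<longrightarrow>
        (\<forall>f \<in> mod_hom R M N. \<eta> N f \<in> Gamma R I N) \<and>
        (\<forall>f \<in> mod_hom R M N. \<forall>g \<in> mod_hom R M N.
            \<eta> N (hom_add M N f g) = \<eta> N f \<oplus>\<^bsub>N\<^esub> \<eta> N g) \<and>
        (\<forall>r \<in> carrier R. \<forall>f \<in> mod_hom R M N.
            \<eta> N (hom_smult M N r f) = r \<odot>\<^bsub>N\<^esub> \<eta> N f)) \<and>
     (\<forall>N N'. fg_module R N \<longrightarrow> fg_module R N' \<longrightarrow>
        (\<forall>g \<in> mod_hom R N N'. \<forall>f \<in> mod_hom R M N.
            \<eta> N' (compose (carrier M) g f) = g (\<eta> N f)))"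

text \<open>Gamma_I is representable: naturally isomorphic to h_M for a finitely generated M.
  (A natural transformation with bijective components is a natural isomorphism.)\<close>
definition Gamma_representable :: "('a, 'c) ring_scheme \<Rightarrow> 'a set \<Rightarrow> bool" where
  "Gamma_representable R I \<longleftrightarrow>
     (\<exists>(M :: 'a obj) \<eta>. fg_module R M \<and> nat_trans_hom_Gamma R I M \<eta> \<and>
        (\<forall>N. fg_module R N \<longrightarrow> bij_betw (\<eta> N) (mod_hom R M N) (Gamma R I N)))"

definition Gamma_fin_gen :: "('a, 'c) ring_scheme \<Rightarrow> 'a set \<Rightarrow> bool" where
  "Gamma_fin_gen R I \<longleftrightarrow>
     (\<exists>(M :: 'a obj) \<eta>. fg_module R M \<and> nat_trans_hom_Gamma R I M \<eta> \<and>
        (\<forall>N. fg_module R N \<longrightarrow> \<eta> N ` mod_hom R M N = Gamma R I N))"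

end

theory Submission
  imports Defs
begin

definition qcls :: "('a,'c) ring_scheme \<Rightarrow> 'a set \<Rightarrow> 'a \<Rightarrow> (nat \<Rightarrow> 'a) set" where
  "qcls R J r = {g. g 0 \<in> carrier R \<and> a_minus R (g 0) r \<in> J}"
definition qrep :: "('a,'c) ring_scheme \<Rightarrow> 'a set \<Rightarrow> (nat \<Rightarrow> 'a) set \<Rightarrow> 'a" where
  "qrep R J C = (SOME r. r \<in> carrier R \<and> C = qcls R J r)"
definition qmod :: "('a,'c) ring_scheme \<Rightarrow> 'a set \<Rightarrow> 'a obj" where
  "qmod R J = \<lparr>carrier = qcls R J ` carrier R, monoid.mult = (\<lambda>A B. A), one = qcls R J \<one>\<^bsub>R\<^esub>,
     ring.zero = qcls R J \<zero>\<^bsub>R\<^esub>, ring.add = (\<lambda>A B. qcls R J (qrep R J A \<oplus>\<^bsub>R\<^esub> qrep R J B)),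
     module.smult = (\<lambda>r A. qcls R J (r \<otimes>\<^bsub>R\<^esub> qrep R J A))\<rparr>"

context cring begin

lemma qcls_eq:
  assumes J: "ideal J R" and r: "r \<in> carrier R" and s: "s \<in> carrier R"
  shows "qcls R J r = qcls R J s \<longleftrightarrow> r \<ominus> s \<in> J"
proof
  assume "qcls R J r = qcls R J s"
  moreover have "(\<lambda>_. r) \<in> qcls R J r" using r J unfolding qcls_def
    by (simp add: a_minus_def r_neg additive_subgroup.zero_closed ideal.axioms(1))
  ultimately show "r \<ominus> s \<in> J" unfolding qcls_def by auto
next
  assume h: "r \<ominus> s \<in> J"
  have h2: "s \<ominus> r \<in> J"
  proof -
    have "s \<ominus> r = \<ominus> (r \<ominus> s)" using r s by (simp add: minus_eq minus_add a_comm)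
    thus ?thesis using h J by (metis additive_subgroup.a_inv_closed ideal.axioms(1))
  qed
  have eq: "\<And>x a b. x \<in> carrier R \<Longrightarrow> a \<in> carrier R \<Longrightarrow> b \<in> carrier R \<Longrightarrow>
     x \<ominus> b = (x \<ominus> a) \<oplus> (a \<ominus> b)"
  proof -
    fix x a b assume h: "x \<in> carrier R" "a \<in> carrier R" "b \<in> carrier R"
    have "(x \<ominus> a) \<oplus> (a \<ominus> b) = x \<oplus> ((\<ominus> a \<oplus> a) \<oplus> \<ominus> b)"
      using h by (simp add: minus_eq a_assoc)
    thus "x \<ominus> b = (x \<ominus> a) \<oplus> (a \<ominus> b)" using h by (simp add: l_neg minus_eq)
  qed
  have cl: "\<And>u v. u \<in> J \<Longrightarrow> v \<in> J \<Longrightarrow> u \<oplus> v \<in> J"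
    using J by (meson additive_subgroup.a_closed ideal.axioms(1))
  show "qcls R J r = qcls R J s"
  proof (rule equalityI; rule subsetI)
    fix g assume "g \<in> qcls R J r"
    hence g: "g 0 \<in> carrier R" "g 0 \<ominus> r \<in> J" unfolding qcls_def by auto
    have "g 0 \<ominus> s \<in> J" using eq[OF g(1) r s] cl[OF g(2) h] by simp
    thus "g \<in> qcls R J s" using g unfolding qcls_def by auto
  next
    fix g assume "g \<in> qcls R J s"
    hence g: "g 0 \<in> carrier R" "g 0 \<ominus> s \<in> J" unfolding qcls_def by auto
    have "g 0 \<ominus> r \<in> J" using eq[OF g(1) s r] cl[OF g(2) h2] by simp
    thus "g \<in> qcls R J r" using g unfolding qcls_def by auto
  qed
qed


lemma qrep_cls:
  assumes J: "ideal J R" and r: "r \<in> carrier R"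
  shows "qrep R J (qcls R J r) \<in> carrier R \<and> qcls R J (qrep R J (qcls R J r)) = qcls R J r"
  unfolding qrep_def by (rule someI2[of _ r]) (use r in auto)

lemma qadd:
  assumes J: "ideal J R" and a: "a \<in> carrier R" and b: "b \<in> carrier R"
  shows "qcls R J (qrep R J (qcls R J a) \<oplus> qrep R J (qcls R J b)) = qcls R J (a \<oplus> b)"
proof -
  obtain a' where a': "a' \<in> carrier R" "qcls R J a' = qcls R J a" "qrep R J (qcls R J a) = a'"
    using qrep_cls[OF J a] by blast
  obtain b' where b': "b' \<in> carrier R" "qcls R J b' = qcls R J b" "qrep R J (qcls R J b) = b'"
    using qrep_cls[OF J b] by blast
  have "a' \<ominus> a \<in> J" "b' \<ominus> b \<in> J" using a' b' qcls_eq[OF J] a b by auto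
  hence "(a' \<ominus> a) \<oplus> (b' \<ominus> b) \<in> J" using J by (meson additive_subgroup.a_closed ideal.axioms(1))
  moreover have "(a' \<ominus> a) \<oplus> (b' \<ominus> b) = (a' \<oplus> b') \<ominus> (a \<oplus> b)"
    using a b a'(1) b'(1) by (simp add: minus_eq minus_add a_ac)
  ultimately show ?thesis using a' b' qcls_eq[OF J] a b by auto
qed

lemma qsmult:
  assumes J: "ideal J R" and a: "a \<in> carrier R" and r: "r \<in> carrier R"
  shows "qcls R J (r \<otimes> qrep R J (qcls R J a)) = qcls R J (r \<otimes> a)"
proof -
  obtain a' where a': "a' \<in> carrier R" "qcls R J a' = qcls R J a" "qrep R J (qcls R J a) = a'"
    using qrep_cls[OF J a] by blast
  have "a' \<ominus> a \<in> J" using a' qcls_eq[OF J] a by auto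
  hence "r \<otimes> (a' \<ominus> a) \<in> J" using J r by (meson ideal.I_l_closed)
  moreover have "r \<otimes> (a' \<ominus> a) = r \<otimes> a' \<ominus> r \<otimes> a"
    using a r a'(1) by (simp add: minus_eq r_distr r_minus)
  ultimately show ?thesis using a' qcls_eq[OF J] a r by auto
qed

lemma qmod_carrier: "carrier (qmod R J) = qcls R J ` carrier R"
  by (simp add: qmod_def)

lemma qmod_add:
  assumes J: "ideal J R" and a: "a \<in> carrier R" and b: "b \<in> carrier R"
  shows "qcls R J a \<oplus>\<^bsub>qmod R J\<^esub> qcls R J b = qcls R J (a \<oplus> b)"
  using qadd[OF assms] by (simp add: qmod_def)

lemma qmod_smult:
  assumes J: "ideal J R" and a: "a \<in> carrier R" and r: "r \<in> carrier R"
  shows "r \<odot>\<^bsub>qmod R J\<^esub> qcls R J a = qcls R J (r \<otimes> a)"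
  using qsmult[OF assms] by (simp add: qmod_def)

lemma qmod_zero: "\<zero>\<^bsub>qmod R J\<^esub> = qcls R J \<zero>"
  by (simp add: qmod_def)

lemma qmod_module:
  assumes J: "ideal J R"
  shows "module R (qmod R J)"
proof (rule moduleI)
  show "cring R" by (rule is_cring)
  show "abelian_group (qmod R J)"
  proof (rule abelian_groupI, goal_cases)
    case (1 x y) thus ?case using qmod_add[OF J] by (auto simp: qmod_carrier)
  next
    case 2 thus ?case by (auto simp: qmod_carrier qmod_zero)
  next
    case (3 x y z) thus ?case using qmod_add[OF J] by (auto simp: qmod_carrier a_assoc)
  next
    case (4 x y) thus ?case using qmod_add[OF J] by (auto simp: qmod_carrier a_comm)
  next
    case (5 x) thus ?case using qmod_add[OF J] by (auto simp: qmod_carrier qmod_zero)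
  next
    case (6 x)
    then obtain a where a: "a \<in> carrier R" "x = qcls R J a" by (auto simp: qmod_carrier)
    hence "qcls R J (\<ominus> a) \<in> carrier (qmod R J)" "qcls R J (\<ominus> a) \<oplus>\<^bsub>qmod R J\<^esub> x = \<zero>\<^bsub>qmod R J\<^esub>"
      using qmod_add[OF J] by (auto simp: qmod_carrier qmod_zero l_neg)
    thus ?case by blast
  qed
next
  fix a x assume "a \<in> carrier R" "x \<in> carrier (qmod R J)"
  thus "a \<odot>\<^bsub>qmod R J\<^esub> x \<in> carrier (qmod R J)" using qmod_smult[OF J] by (auto simp: qmod_carrier)
next
  fix a b x assume "a \<in> carrier R" "b \<in> carrier R" "x \<in> carrier (qmod R J)"
  thus "(a \<oplus> b) \<odot>\<^bsub>qmod R J\<^esub> x = a \<odot>\<^bsub>qmod R J\<^esub> x \<oplus>\<^bsub>qmod R J\<^esub> b \<odot>\<^bsub>qmod R J\<^esub> x"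
    using qmod_smult[OF J] qmod_add[OF J] by (auto simp: qmod_carrier l_distr)
next
  fix a x y assume "a \<in> carrier R" "x \<in> carrier (qmod R J)" "y \<in> carrier (qmod R J)"
  thus "a \<odot>\<^bsub>qmod R J\<^esub> (x \<oplus>\<^bsub>qmod R J\<^esub> y) = a \<odot>\<^bsub>qmod R J\<^esub> x \<oplus>\<^bsub>qmod R J\<^esub> a \<odot>\<^bsub>qmod R J\<^esub> y"
    using qmod_smult[OF J] qmod_add[OF J] by (auto simp: qmod_carrier r_distr)
next
  fix a b x assume "a \<in> carrier R" "b \<in> carrier R" "x \<in> carrier (qmod R J)"
  thus "(a \<otimes> b) \<odot>\<^bsub>qmod R J\<^esub> x = a \<odot>\<^bsub>qmod R J\<^esub> (b \<odot>\<^bsub>qmod R J\<^esub> x)"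
    using qmod_smult[OF J] by (auto simp: qmod_carrier m_assoc)
next
  fix x assume "x \<in> carrier (qmod R J)"
  thus "\<one> \<odot>\<^bsub>qmod R J\<^esub> x = x"
    using qmod_smult[OF J] by (auto simp: qmod_carrier)
qed

lemma qcls_zero_iff:
  assumes J: "ideal J R" and a: "a \<in> carrier R"
  shows "qcls R J a = \<zero>\<^bsub>qmod R J\<^esub> \<longleftrightarrow> a \<in> J"
proof -
  have "a \<ominus> \<zero> = a" using a by (simp add: minus_eq)
  thus ?thesis using qcls_eq[OF J a zero_closed] by (simp add: qmod_zero)
qed

lemma qcls_one_smult:
  assumes J: "ideal J R" and a: "a \<in> carrier R"
  shows "a \<odot>\<^bsub>qmod R J\<^esub> qcls R J \<one> = qcls R J a"
  using qmod_smult[OF J one_closed a] a by simp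

lemma qmod_fg:
  assumes J: "ideal J R"
  shows "fg_module R (qmod R J)"
  unfolding fg_module_def
proof (intro conjI exI[of _ "{qcls R J \<one>}"] ballI)
  interpret Q: module R "qmod R J" by (rule qmod_module[OF J])
  show "module R (qmod R J)" by (rule qmod_module[OF J])
  show "finite {qcls R J \<one>}" by simp
  show "{qcls R J \<one>} \<subseteq> carrier (qmod R J)" by (simp add: qmod_carrier)
  fix x assume "x \<in> carrier (qmod R J)"
  then obtain r where r: "r \<in> carrier R" "x = qcls R J r" by (auto simp: qmod_carrier)
  have c1: "qcls R J \<one> \<in> carrier (qmod R J)" by (simp add: qmod_carrier)
  have "finsum (qmod R J) (\<lambda>a. (\<lambda>_. r) a \<odot>\<^bsub>qmod R J\<^esub> a) {qcls R J \<one>}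
        = r \<odot>\<^bsub>qmod R J\<^esub> qcls R J \<one>"
    using Q.finsum_insert[of "{}" "qcls R J \<one>" "\<lambda>a. r \<odot>\<^bsub>qmod R J\<^esub> a"] c1 r
    by (simp add: Q.finsum_empty)
  also have "\<dots> = x" using qcls_one_smult[OF J r(1)] r by simp
  finally show "\<exists>c. c \<in> {qcls R J \<one>} \<rightarrow> carrier R \<and>
      x = finsum (qmod R J) (\<lambda>a. c a \<odot>\<^bsub>qmod R J\<^esub> a) {qcls R J \<one>}"
    using r by (intro exI[of _ "\<lambda>_. r"]) auto
qed

lemma qmod_univ:
  assumes J: "ideal J R" and N: "module R N" and m: "m \<in> carrier N"
    and ann: "\<forall>a\<in>J. a \<odot>\<^bsub>N\<^esub> m = \<zero>\<^bsub>N\<^esub>"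
  shows "\<exists>f \<in> mod_hom R (qmod R J) N. f (qcls R J \<one>) = m"
proof -
  interpret N: module R N by (rule N)
  define f where "f = (\<lambda>C \<in> carrier (qmod R J). qrep R J C \<odot>\<^bsub>N\<^esub> m)"
  have fa: "f (qcls R J a) = a \<odot>\<^bsub>N\<^esub> m" if a: "a \<in> carrier R" for a
  proof -
    obtain a' where a': "a' \<in> carrier R" "qcls R J a' = qcls R J a" "qrep R J (qcls R J a) = a'"
      using qrep_cls[OF J a] by blast
    have d: "a' \<ominus> a \<in> J" using a' qcls_eq[OF J] a by auto
    hence dc: "a' \<ominus> a \<in> carrier R" using a a'(1) by simp
    have "a' = a \<oplus> (a' \<ominus> a)"
    proof -
      have "a \<oplus> (a' \<ominus> a) = a' \<oplus> (a \<oplus> \<ominus> a)" using a a'(1) by (simp add: minus_eq a_ac)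
      thus ?thesis using a a'(1) by (simp add: r_neg)
    qed
    hence "a' \<odot>\<^bsub>N\<^esub> m = a \<odot>\<^bsub>N\<^esub> m \<oplus>\<^bsub>N\<^esub> (a' \<ominus> a) \<odot>\<^bsub>N\<^esub> m"
      using N.smult_l_distr[OF a dc m] by simp
    also have "\<dots> = a \<odot>\<^bsub>N\<^esub> m" using ann d a m by simp
    finally show ?thesis using a' unfolding f_def by (simp add: qmod_carrier a)
  qed
  have "f \<in> mod_hom R (qmod R J) N"
    unfolding mod_hom_def
  proof (intro CollectI conjI ballI)
    show "f \<in> carrier (qmod R J) \<rightarrow>\<^sub>E carrier N"
    proof
      fix x assume "x \<in> carrier (qmod R J)"
      then obtain a where "a \<in> carrier R" "x = qcls R J a" by (auto simp: qmod_carrier)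
      thus "f x \<in> carrier N" using fa m by simp
    next
      fix x assume "x \<notin> carrier (qmod R J)" thus "f x = undefined" unfolding f_def by simp
    qed
  next
    fix x y assume "x \<in> carrier (qmod R J)" "y \<in> carrier (qmod R J)"
    then obtain a b where ab: "a \<in> carrier R" "x = qcls R J a" "b \<in> carrier R" "y = qcls R J b"
      by (auto simp: qmod_carrier)
    thus "f (x \<oplus>\<^bsub>qmod R J\<^esub> y) = f x \<oplus>\<^bsub>N\<^esub> f y"
      using qmod_add[OF J] fa N.smult_l_distr m by simp
  next
    fix r x assume "r \<in> carrier R" "x \<in> carrier (qmod R J)"
    then obtain a where ab: "r \<in> carrier R" "a \<in> carrier R" "x = qcls R J a"
      by (auto simp: qmod_carrier)
    thus "f (r \<odot>\<^bsub>qmod R J\<^esub> x) = r \<odot>\<^bsub>N\<^esub> f x"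
      using qmod_smult[OF J] fa N.smult_assoc1 m by simp
  qed
  moreover have "f (qcls R J \<one>) = m" using fa[OF one_closed] m by simp
  ultimately show ?thesis by blast
qed

lemma qmod_hom_det:
  assumes J: "ideal J R" and N: "module R N" and f: "f \<in> mod_hom R (qmod R J) N"
    and a: "a \<in> carrier R"
  shows "f (qcls R J a) = a \<odot>\<^bsub>N\<^esub> f (qcls R J \<one>)"
proof -
  have "qcls R J a = a \<odot>\<^bsub>qmod R J\<^esub> qcls R J \<one>" using qcls_one_smult[OF J a] by simp
  moreover have "qcls R J \<one> \<in> carrier (qmod R J)" by (simp add: qmod_carrier)
  ultimately show ?thesis using f a unfolding mod_hom_def by simp
qed

lemma ideal_pow_0: "ideal_pow R I 0 = carrier R"
  by (simp add: ideal_pow_def nat_pow_def ideals_set_def)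

lemma ideal_pow_Suc: "ideal_pow R I (Suc k) = ideal_prod R (ideal_pow R I k) I"
  by (simp add: ideal_pow_def nat_pow_def ideals_set_def)

lemma ideal_pow_ideal:
  assumes I: "ideal I R" shows "ideal (ideal_pow R I k) R"
  by (induct k) (simp_all add: ideal_pow_0 ideal_pow_Suc oneideal ideal_prod_is_ideal I)

lemma ideal_pow_Suc_sub:
  assumes I: "ideal I R" shows "ideal_pow R I (Suc k) \<subseteq> ideal_pow R I k"
  using ideal_prod_inter[OF ideal_pow_ideal[OF I] I] by (auto simp: ideal_pow_Suc)

lemma ideal_pow_anti:
  assumes I: "ideal I R" and kl: "k \<le> l" shows "ideal_pow R I l \<subseteq> ideal_pow R I k"
  using kl
proof (induct l)
  case 0 thus ?case by simp
next
  case (Suc l) thus ?case using ideal_pow_Suc_sub[OF I, of l] by (cases "k = Suc l") auto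
qed

lemma ideal_pow_stable:
  assumes I: "ideal I R" and st: "ideal_pow R I n = ideal_pow R I (Suc n)"
  shows "ideal_pow R I n \<subseteq> ideal_pow R I k"
proof (cases "k \<le> n")
  case True thus ?thesis using ideal_pow_anti[OF I] by blast
next
  case False
  have "n \<le> l \<Longrightarrow> ideal_pow R I l = ideal_pow R I n" for l
  proof (induct l)
    case 0 thus ?case by simp
  next
    case (Suc l)
    show ?case
    proof (cases "n = Suc l")
      case True thus ?thesis by simp
    next
      case False
      hence "n \<le> l" using Suc.prems by simp
      hence "ideal_pow R I l = ideal_pow R I n" using Suc.hyps by blast
      hence "ideal_pow R I (Suc l) = ideal_pow R I (Suc n)" by (simp only: ideal_pow_Suc)
      thus ?thesis using st by simp
    qed
  qed
  from this[of k] False show ?thesis by simp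
qed

lemma Gamma_stable:
  assumes I: "ideal I R" and st: "ideal_pow R I n = ideal_pow R I (Suc n)"
  shows "Gamma R I N = {m \<in> carrier N. \<forall>a \<in> ideal_pow R I n. a \<odot>\<^bsub>N\<^esub> m = \<zero>\<^bsub>N\<^esub>}"
  unfolding Gamma_def using ideal_pow_stable[OF I st] by blast

end

lemma hom_zero:
  assumes M: "module R M" and N: "module R N" and g: "g \<in> mod_hom R M N"
  shows "g \<zero>\<^bsub>M\<^esub> = \<zero>\<^bsub>N\<^esub>"
proof -
  interpret M: module R M by (rule M)
  interpret N: module R N by (rule N)
  have z: "\<zero>\<^bsub>M\<^esub> = \<zero>\<^bsub>R\<^esub> \<odot>\<^bsub>M\<^esub> \<zero>\<^bsub>M\<^esub>" by simp
  have "g \<zero>\<^bsub>M\<^esub> \<in> carrier N" using g unfolding mod_hom_def by auto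
  moreover have "g (\<zero>\<^bsub>R\<^esub> \<odot>\<^bsub>M\<^esub> \<zero>\<^bsub>M\<^esub>) = \<zero>\<^bsub>R\<^esub> \<odot>\<^bsub>N\<^esub> g \<zero>\<^bsub>M\<^esub>"
  proof -
    have "\<zero>\<^bsub>M\<^esub> \<in> carrier M" "\<zero>\<^bsub>R\<^esub> \<in> carrier R" by simp_all
    thus ?thesis using g unfolding mod_hom_def by blast
  qed
  ultimately show ?thesis using z by simp
qed

lemma fin_gen_imp_stable:
  fixes R :: "'a ring" and I :: "'a set"
  assumes cr: "cring R" and I: "ideal I R" and fg: "Gamma_fin_gen R I"
  shows "\<exists>n. ideal_pow R I n = ideal_pow R I (Suc n)"
proof -
  interpret cring R by (rule cr)
  obtain M :: "'a obj" and \<eta> where M: "fg_module R M" and nt: "nat_trans_hom_Gamma R I M \<eta>"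
    and surj: "\<forall>N. fg_module R N \<longrightarrow> \<eta> N ` mod_hom R M N = Gamma R I N"
    using fg unfolding Gamma_fin_gen_def by blast
  have modM: "module R M" using M unfolding fg_module_def by blast
  interpret Mm: module R M by (rule modM)
  define idM where "idM = (\<lambda>x\<in>carrier M. x)"
  have idM_hom: "idM \<in> mod_hom R M M" unfolding mod_hom_def idM_def by auto
  define x where "x = \<eta> M idM"
  have nt1: "\<And>(N :: 'a obj) f. fg_module R N \<Longrightarrow> f \<in> mod_hom R M N \<Longrightarrow> \<eta> N f \<in> Gamma R I N"
  proof -
    fix N :: "'a obj" and f assume a1: "fg_module R N" and a2: "f \<in> mod_hom R M N"
    have "(\<forall>f\<in>mod_hom R M N. \<eta> N f \<in> Gamma R I N)"
      using conjunct1[OF nt[unfolded nat_trans_hom_Gamma_def], rule_format, OF a1] by (rule conjunct1)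
    thus "\<eta> N f \<in> Gamma R I N" using a2 by (rule bspec)
  qed
  have nt2: "\<And>(N :: 'a obj) (N' :: 'a obj) g f. fg_module R N \<Longrightarrow> fg_module R N' \<Longrightarrow> g \<in> mod_hom R N N'
     \<Longrightarrow> f \<in> mod_hom R M N \<Longrightarrow> \<eta> N' (compose (carrier M) g f) = g (\<eta> N f)"
    using conjunct2[OF nt[unfolded nat_trans_hom_Gamma_def]] by simp
  have "x \<in> Gamma R I M" using nt1[OF M idM_hom] unfolding x_def .
  then obtain k where xc: "x \<in> carrier M"
    and kx: "\<forall>a\<in>ideal_pow R I k. a \<odot>\<^bsub>M\<^esub> x = \<zero>\<^bsub>M\<^esub>"
    unfolding Gamma_def by blast
  define J where "J = ideal_pow R I (Suc k)"
  have J: "ideal J R" unfolding J_def by (rule ideal_pow_ideal[OF I])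
  define N where "N = qmod R J"
  have fgN: "fg_module R N" unfolding N_def by (rule qmod_fg[OF J])
  have modN: "module R N" unfolding N_def by (rule qmod_module[OF J])
  have "qcls R J \<one>\<^bsub>R\<^esub> \<in> Gamma R I N"
    unfolding Gamma_def N_def
  proof (intro CollectI conjI exI[of _ "Suc k"] ballI)
    show "qcls R J \<one>\<^bsub>R\<^esub> \<in> carrier (qmod R J)" by (simp add: qmod_carrier)
    fix a assume a: "a \<in> ideal_pow R I (Suc k)"
    hence ac: "a \<in> carrier R" using J unfolding J_def by (meson ideal.Icarr)
    show "a \<odot>\<^bsub>qmod R J\<^esub> qcls R J \<one>\<^bsub>R\<^esub> = \<zero>\<^bsub>qmod R J\<^esub>"
      using qcls_one_smult[OF J ac] qcls_zero_iff[OF J ac] a J_def by simp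
  qed
  then obtain g where g: "g \<in> mod_hom R M N" and gq: "\<eta> N g = qcls R J \<one>\<^bsub>R\<^esub>"
    using surj fgN by (metis (no_types, lifting) imageE)
  have "\<eta> N (compose (carrier M) g idM) = g (\<eta> M idM)"
    by (rule nt2[OF M fgN g idM_hom])
  moreover have "compose (carrier M) g idM = g"
  proof
    fix y show "compose (carrier M) g idM y = g y"
      using g unfolding compose_def idM_def mod_hom_def by (auto simp: PiE_def extensional_def)
  qed
  ultimately have gx: "g x = qcls R J \<one>\<^bsub>R\<^esub>" using gq x_def by simp
  have "ideal_pow R I k \<subseteq> J"
  proof
    fix a assume a: "a \<in> ideal_pow R I k"
    hence ac: "a \<in> carrier R" using ideal_pow_ideal[OF I] by (meson ideal.Icarr)
    have "qcls R J a = a \<odot>\<^bsub>N\<^esub> g x" using qcls_one_smult[OF J ac] gx N_def by simp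
    also have "\<dots> = g (a \<odot>\<^bsub>M\<^esub> x)" using g ac xc unfolding mod_hom_def by simp
    also have "\<dots> = g \<zero>\<^bsub>M\<^esub>" using kx a by simp
    also have "\<dots> = \<zero>\<^bsub>N\<^esub>" by (rule hom_zero[OF modM modN g])
    finally show "a \<in> J" using qcls_zero_iff[OF J ac] N_def by simp
  qed
  hence "ideal_pow R I k = ideal_pow R I (Suc k)" using ideal_pow_Suc_sub[OF I, of k] J_def by blast
  thus ?thesis by blast
qed

lemma stable_imp_rep:
  fixes R :: "'a ring" and I :: "'a set"
  assumes cr: "cring R" and I: "ideal I R" and st: "ideal_pow R I n = ideal_pow R I (Suc n)"
  shows "Gamma_representable R I"
proof -
  interpret cring R by (rule cr)
  define J where "J = ideal_pow R I n"
  have J: "ideal J R" unfolding J_def by (rule ideal_pow_ideal[OF I])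
  define M where "M = qmod R J"
  define \<eta> where "\<eta> = (\<lambda>(N :: 'a obj) (f :: (nat \<Rightarrow> 'a) set \<Rightarrow> (nat \<Rightarrow> 'a) set). f (qcls R J \<one>\<^bsub>R\<^esub>))"
  have fgM: "fg_module R M" unfolding M_def by (rule qmod_fg[OF J])
  have modM: "module R M" unfolding M_def by (rule qmod_module[OF J])
  have c1: "qcls R J \<one>\<^bsub>R\<^esub> \<in> carrier M" unfolding M_def by (simp add: qmod_carrier)
  have inG: "\<eta> N f \<in> Gamma R I N" if N: "fg_module R N" and f: "f \<in> mod_hom R M N" for N f
  proof -
    have modN: "module R N" using N unfolding fg_module_def by blast
    have "f (qcls R J \<one>\<^bsub>R\<^esub>) \<in> carrier N" using f c1 unfolding mod_hom_def by auto
    moreover have "\<forall>a\<in>J. a \<odot>\<^bsub>N\<^esub> f (qcls R J \<one>\<^bsub>R\<^esub>) = \<zero>\<^bsub>N\<^esub>"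
    proof
      fix a assume a: "a \<in> J"
      hence ac: "a \<in> carrier R" using J by (meson ideal.Icarr)
      have "a \<odot>\<^bsub>N\<^esub> f (qcls R J \<one>\<^bsub>R\<^esub>) = f (a \<odot>\<^bsub>M\<^esub> qcls R J \<one>\<^bsub>R\<^esub>)"
        using f c1 ac unfolding mod_hom_def by simp
      also have "\<dots> = f \<zero>\<^bsub>M\<^esub>" using qcls_one_smult[OF J ac] qcls_zero_iff[OF J ac] a M_def by simp
      also have "\<dots> = \<zero>\<^bsub>N\<^esub>" by (rule hom_zero[OF modM modN f])
      finally show "a \<odot>\<^bsub>N\<^esub> f (qcls R J \<one>\<^bsub>R\<^esub>) = \<zero>\<^bsub>N\<^esub>" .
    qed
    ultimately show ?thesis unfolding Gamma_stable[OF I st] \<eta>_def J_def by simp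
  qed
  have nt: "nat_trans_hom_Gamma R I M \<eta>"
    unfolding nat_trans_hom_Gamma_def
  proof (intro conjI allI impI ballI)
    fix N :: "'a obj" and f assume "fg_module R N" "f \<in> mod_hom R M N"
    thus "\<eta> N f \<in> Gamma R I N" by (rule inG)
  next
    fix N :: "'a obj" and f g
    show "\<eta> N (hom_add M N f g) = \<eta> N f \<oplus>\<^bsub>N\<^esub> \<eta> N g"
      unfolding \<eta>_def hom_add_def using c1 by simp
  next
    fix N :: "'a obj" and r f
    show "\<eta> N (hom_smult M N r f) = r \<odot>\<^bsub>N\<^esub> \<eta> N f"
      unfolding \<eta>_def hom_smult_def using c1 by simp
  next
    fix N N' :: "'a obj" and g f
    show "\<eta> N' (compose (carrier M) g f) = g (\<eta> N f)"
      unfolding \<eta>_def compose_def using c1 by simp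
  qed
  have bij: "bij_betw (\<eta> N) (mod_hom R M N) (Gamma R I N)" if N: "fg_module R N" for N
  proof (rule bij_betwI')
    have modN: "module R N" using N unfolding fg_module_def by blast
    fix f g assume f: "f \<in> mod_hom R M N" and g: "g \<in> mod_hom R M N"
    show "(\<eta> N f = \<eta> N g) = (f = g)"
    proof
      assume eq: "\<eta> N f = \<eta> N g"
      show "f = g"
      proof
        fix y show "f y = g y"
        proof (cases "y \<in> carrier M")
          case True
          then obtain a where a: "a \<in> carrier R" "y = qcls R J a" unfolding M_def by (auto simp: qmod_carrier)
          thus ?thesis using qmod_hom_det[OF J modN, of f a] qmod_hom_det[OF J modN, of g a] f g eq
            unfolding M_def \<eta>_def by simp
        next
          case False thus ?thesis using f g unfolding mod_hom_def by (auto simp: PiE_def extensional_def)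
        qed
      qed
    qed simp
  next
    fix f assume "f \<in> mod_hom R M N" thus "\<eta> N f \<in> Gamma R I N" by (rule inG[OF N])
  next
    have modN: "module R N" using N unfolding fg_module_def by blast
    fix m assume "m \<in> Gamma R I N"
    hence m: "m \<in> carrier N" "\<forall>a\<in>J. a \<odot>\<^bsub>N\<^esub> m = \<zero>\<^bsub>N\<^esub>"
      unfolding Gamma_stable[OF I st] J_def by auto
    then obtain f where "f \<in> mod_hom R M N" "f (qcls R J \<one>\<^bsub>R\<^esub>) = m"
      using qmod_univ[OF J modN] unfolding M_def by blast
    thus "\<exists>f\<in>mod_hom R M N. m = \<eta> N f" unfolding \<eta>_def by auto
  qed
  show ?thesis unfolding Gamma_representable_def using fgM nt bij by blast
qed

theorem corollary3p3:
  fixes R :: "'a ring" and I :: "'a set"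
  assumes "cring R" and "noetherian_ring R" and "ideal I R"
  shows "(Gamma_representable R I \<longleftrightarrow> Gamma_fin_gen R I) \<and>
         (Gamma_fin_gen R I \<longleftrightarrow> (\<exists>n. ideal_pow R I n = ideal_pow R I (Suc n)))"
proof -
  have A: "Gamma_representable R I \<Longrightarrow> Gamma_fin_gen R I"
    unfolding Gamma_representable_def Gamma_fin_gen_def
    by (meson bij_betw_imp_surj_on)
  have B: "Gamma_fin_gen R I \<Longrightarrow> \<exists>n. ideal_pow R I n = ideal_pow R I (Suc n)"
    using fin_gen_imp_stable assms by blast
  have C: "\<exists>n. ideal_pow R I n = ideal_pow R I (Suc n) \<Longrightarrow> Gamma_representable R I"
    using stable_imp_rep assms by blast
  show ?thesis using A B C by blast
qed

end
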